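(* Let $r\ge1$, $k_1,\dots,k_r\ge1$, $k=\sum k_\alpha$, and let $\Pi\in\mathrm{Part}_2(2k)$ satisfy $\#(\Pi_0\vee\Pi_1\vee\Pi)=1$ and $\#(\Pi_1\vee\Pi)=1$. Then $$\lim_{p\to\infty}\frac1p\sum_{\substack{\mathbf j:\ (p,2k)\text{-word},\\ \mathbf j\ \Pi_1\text{-measurable}}}C_\Pi(\mathbf j)=\sum_{\mathbf j\in\mathbb Z^{\Pi_1}/\mathbb Z^{\Pi_1\vee\Pi}}C_\Pi(\mathbf j),$$ the right-hand sum being well defined and absolutely convergent.
   Context: $\{Z_j\}_{j\in\mathbb Z}$ is a stationary real sequence with all moments finite, $\mathbf EZ_0=0$, and $\sum_{j_1,\dots,j_r\in\mathbb Z}|\mathbf C(Z_0,Z_{j_1},\dots,Z_{j_r})|<\infty$ for all $r\ge1$, where $\mathbf C$ is the joint cumulant $\mathbf C(X_1,\dots,X_k)=i^{-k}\frac{\partial^k}{\partial t_1\cdots\partial t_k}\log\mathbf E\exp(\sum_j it_jX_j)|_{t=0}$. $\mathrm{Part}(m)$ is the set of set partitions of $\{1,\dots,m\}$; $\mathrm{Part}_2(m)$ those with all parts of size $\ge2$; $\Pi\vee\Sigma$ is the finest partition refined by both. With $K_0=0$, $K_\alpha=2\sum_{\beta\le\alpha}k_\beta$: $\Pi_0=\{\{2i-1,2i\}:i=1,\dots,k\}$, $\Pi_1=\bigcup_{\alpha=1}^r\big(\{\{K_{\alpha-1}+2\nu,K_{\alpha-1}+2\nu+1\}:1\le\nu\le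 k_\alpha-1\}\cup\{\{K_\alpha,K_{\alpha-1}+1\}\}\big)$. A $(p,2k)$-word is a function $\mathbf j:\{1,\dots,2k\}\to\{1,\dots,p\}$, $\Pi$-measurable if constant on parts of $\Pi$. For $\mathbf j:\{1,\dots,2k\}\to\mathbb Z$, $C_\Pi(\mathbf j)=\prod_{A\in\Pi}\mathbf C(\{Z_{\mathbf j(i)}\}_{i\in A})$. $\mathbb Z^\Sigma$ denotes the group of functions $\{1,\dots,2k\}\to\mathbb Z$ constant on each part of $\Sigma$ (so $\mathbb Z^{\Pi_1\vee\Pi}\subset\mathbb Z^{\Pi_1}$), and $C_\Pi$ is constant on cosets of $\mathbb Z^{\Pi}\supset\mathbb Z^{\Pi_1\vee\Pi}$. *)

theory Defs
  imports "HOL-Probability.Probability"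
begin

definition Part :: "nat \<Rightarrow> nat set set set" where
  "Part m = {P. partition_on {1..m} P}"

definition Part2 :: "nat \<Rightarrow> nat set set set" where
  "Part2 m = {P \<in> Part m. \<forall>B\<in>P. 2 \<le> card B}"

definition same_block :: "'a set set \<Rightarrow> ('a \<times> 'a) set" where
  "same_block P = {(x, y). \<exists>B\<in>P. x \<in> B \<and> y \<in> B}"

definition pjoin :: "nat \<Rightarrow> nat set set \<Rightarrow> nat set set \<Rightarrow> nat set set" where
  "pjoin m P Q = {1..m} // ((same_block P \<union> same_block Q)\<^sup>*)"

definition Kidx :: "(nat \<Rightarrow> nat) \<Rightarrow> nat \<Rightarrow> nat" where
  "Kidx kk \<alpha> = 2 * (\<Sum>\<beta>\<in>{1..\<alpha>}. kk \<beta>)"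

definition Pi0 :: "nat \<Rightarrow> nat set set" where
  "Pi0 k = {{2*i - 1, 2*i} | i. 1 \<le> i \<and> i \<le> k}"

definition Pi1 :: "nat \<Rightarrow> (nat \<Rightarrow> nat) \<Rightarrow> nat set set" where
  "Pi1 r kk = (\<Union>\<alpha>\<in>{1..r}.
      {{Kidx kk (\<alpha> - 1) + 2*\<nu>, Kidx kk (\<alpha> - 1) + 2*\<nu> + 1} | \<nu>. 1 \<le> \<nu> \<and> \<nu> \<le> kk \<alpha> - 1}
      \<union> {{Kidx kk \<alpha>, Kidx kk (\<alpha> - 1) + 1}})"

(* joint cumulant of the family (X i)_{i \<in> A}, via the moment-cumulant formula
   C(X_A) = sum_{pi partition of A} (-1)^(|pi|-1) (|pi|-1)! prod_{B in pi} E[prod_{i in B} X_i] *)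
definition cumulant :: "'a measure \<Rightarrow> ('i \<Rightarrow> 'a \<Rightarrow> real) \<Rightarrow> 'i set \<Rightarrow> real" where
  "cumulant M X A =
     (\<Sum>P\<in>{P. partition_on A P}.
        (-1) ^ (card P - 1) * fact (card P - 1) *
        (\<Prod>B\<in>P. integral\<^sup>L M (\<lambda>\<omega>. \<Prod>i\<in>B. X i \<omega>)))"

definition CPi :: "'a measure \<Rightarrow> (int \<Rightarrow> 'a \<Rightarrow> real) \<Rightarrow> nat set set \<Rightarrow> (nat \<Rightarrow> int) \<Rightarrow> real" where
  "CPi M Z P j = (\<Prod>A\<in>P. cumulant M (\<lambda>i. Z (j i)) A)"

definition words :: "nat \<Rightarrow> nat \<Rightarrow> (nat \<Rightarrow> nat) set" where
  "words p m = {1..m} \<rightarrow>\<^sub>E {1..p}"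

definition measurable_wrt :: "'b set set \<Rightarrow> ('b \<Rightarrow> 'c) \<Rightarrow> bool" where
  "measurable_wrt P j \<longleftrightarrow> (\<forall>B\<in>P. \<forall>x\<in>B. \<forall>y\<in>B. j x = j y)"

definition ZSig :: "nat \<Rightarrow> nat set set \<Rightarrow> (nat \<Rightarrow> int) set" where
  "ZSig m S = {j. (\<forall>i. i \<notin> {1..m} \<longrightarrow> j i = 0) \<and> measurable_wrt S j}"

definition coset :: "(nat \<Rightarrow> int) set \<Rightarrow> (nat \<Rightarrow> int) \<Rightarrow> (nat \<Rightarrow> int) set" where
  "coset H j = {(\<lambda>i. j i + h i) | h. h \<in> H}"

definition quot :: "(nat \<Rightarrow> int) set \<Rightarrow> (nat \<Rightarrow> int) set \<Rightarrow> (nat \<Rightarrow> int) set set" where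
  "quot G H = coset H ` G"

definition stationary_seq :: "'a measure \<Rightarrow> (int \<Rightarrow> 'a \<Rightarrow> real) \<Rightarrow> bool" where
  "stationary_seq M Z \<longleftrightarrow>
     (\<forall>(n::nat) (t::nat \<Rightarrow> int) (s::int).
        distr M (PiM {..<n} (\<lambda>_. borel)) (\<lambda>\<omega>. \<lambda>i\<in>{..<n}. Z (t i + s) \<omega>)
      = distr M (PiM {..<n} (\<lambda>_. borel)) (\<lambda>\<omega>. \<lambda>i\<in>{..<n}. Z (t i) \<omega>))"

definition standing_assumptions :: "'a measure \<Rightarrow> (int \<Rightarrow> 'a \<Rightarrow> real) \<Rightarrow> bool" where
  "standing_assumptions M Z \<longleftrightarrow>
     prob_space M \<and>
     (\<forall>j. Z j \<in> borel_measurable M) \<and>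
     stationary_seq M Z \<and>
     (\<forall>j (n::nat). integrable M (\<lambda>\<omega>. Z j \<omega> ^ n)) \<and>
     integral\<^sup>L M (Z 0) = 0 \<and>
     (\<forall>r::nat. 1 \<le> r \<longrightarrow>
        ((\<lambda>js::nat \<Rightarrow> int. \<bar>cumulant M (\<lambda>i. Z (js i)) {0..r}\<bar>)
          summable_on {js. \<forall>i. i \<notin> {1..r} \<longrightarrow> js i = 0}))"

end

theory Submission
  imports Defs
begin


lemma cum_cong:
  assumes "\<And>i. i \<in> A \<Longrightarrow> X i = Y i"
  shows "cumulant M X A = cumulant M Y A"
  unfolding cumulant_def
proof (intro sum.cong refl arg_cong2[where f="(*)"] prod.cong Bochner_Integration.integral_cong)
  fix P B \<omega> i assume "P \<in> {P. partition_on A P}" "B \<in> P" "i \<in> B"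
  then have "i \<in> A" by (auto dest: partition_onD1)
  then show "X i \<omega> = Y i \<omega>" using assms by simp
qed

lemma cum_reindex:
  assumes bij: "bij_betw \<sigma> B A"
  shows "cumulant M X A = cumulant M (\<lambda>i. X (\<sigma> i)) B"
proof -
  have inj: "inj_on \<sigma> B" and img: "\<sigma> ` B = A" using bij by (auto simp: bij_betw_def)
  define \<tau> where "\<tau> = inv_into B \<sigma>"
  have injt: "inj_on \<tau> A" unfolding \<tau>_def using img inj_on_inv_into by blast
  have imgt: "\<tau> ` A = B" unfolding \<tau>_def by (metis img inj inv_into_image_cancel order_refl)
  have pimg: "(`) f ` Q - {{}} = (`) f ` Q" if "partition_on C Q" for f :: "'x \<Rightarrow> 'y" and Q C
    using partition_onD3[OF that] by auto
  show ?thesis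
    unfolding cumulant_def
  proof (rule sym, rule sum.reindex_bij_witness[where i="\<lambda>P. (`) \<tau> ` P" and j="\<lambda>Q. (`) \<sigma> ` Q"])
    fix Q assume Q: "Q \<in> {P. partition_on B P}"
    then have sub: "b \<subseteq> B" if "b \<in> Q" for b using that by (auto dest: partition_onD1)
    show "(`) \<tau> ` (`) \<sigma> ` Q = Q"
    proof -
      have "\<tau> ` \<sigma> ` b = b" if "b \<in> Q" for b
        unfolding \<tau>_def using sub[OF that] inj by (simp add: inv_into_image_cancel)
      then show ?thesis by (simp add: image_image)
    qed
    show "(`) \<sigma> ` Q \<in> {P. partition_on A P}"
      using partition_on_inj_image[OF _ inj, of Q] Q pimg[of B Q \<sigma>] img by auto
    have injQ: "inj_on ((`) \<sigma>) Q"
      by (rule inj_on_subset[OF inj_on_image_Pow[OF inj]]) (use sub in auto)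
    have "(\<Prod>b\<in>(`) \<sigma> ` Q. integral\<^sup>L M (\<lambda>\<omega>. \<Prod>i\<in>b. X i \<omega>))
        = (\<Prod>q\<in>Q. integral\<^sup>L M (\<lambda>\<omega>. \<Prod>i\<in>\<sigma> ` q. X i \<omega>))"
      by (simp add: prod.reindex[OF injQ])
    also have "\<dots> = (\<Prod>q\<in>Q. integral\<^sup>L M (\<lambda>\<omega>. \<Prod>i\<in>q. X (\<sigma> i) \<omega>))"
    proof (rule prod.cong[OF refl])
      fix q assume "q \<in> Q"
      then have "inj_on \<sigma> q" using sub inj inj_on_subset by blast
      then show "integral\<^sup>L M (\<lambda>\<omega>. \<Prod>i\<in>\<sigma> ` q. X i \<omega>) = integral\<^sup>L M (\<lambda>\<omega>. \<Prod>i\<in>q. X (\<sigma> i) \<omega>)"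
        by (simp add: prod.reindex)
    qed
    finally show "(-1) ^ (card ((`) \<sigma> ` Q) - 1) * fact (card ((`) \<sigma> ` Q) - 1) *
          (\<Prod>b\<in>(`) \<sigma> ` Q. integral\<^sup>L M (\<lambda>\<omega>. \<Prod>i\<in>b. X i \<omega>)) =
          (-1) ^ (card Q - 1) * fact (card Q - 1) * (\<Prod>B\<in>Q. integral\<^sup>L M (\<lambda>\<omega>. \<Prod>i\<in>B. X (\<sigma> i) \<omega>))"
      by (simp add: card_image[OF injQ])
  next
    fix P assume P: "P \<in> {P. partition_on A P}"
    then have sub: "b \<subseteq> A" if "b \<in> P" for b using that by (auto dest: partition_onD1)
    show "(`) \<sigma> ` (`) \<tau> ` P = P"
    proof -
      have "\<sigma> ` \<tau> ` b = b" if "b \<in> P" for b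
        unfolding \<tau>_def using sub[OF that] img by (simp add: image_inv_into_cancel)
      then show ?thesis by (simp add: image_image)
    qed
    show "(`) \<tau> ` P \<in> {P. partition_on B P}"
      using partition_on_inj_image[OF _ injt, of P] P pimg[of A P \<tau>] imgt by auto
  qed
qed



lemma moment_shift:
  assumes stat: "stationary_seq M Z" and meas: "\<And>j. Z j \<in> borel_measurable M" and fin: "finite B"
  shows "integral\<^sup>L M (\<lambda>\<omega>. \<Prod>i\<in>B. Z (g i + s) \<omega>) = integral\<^sup>L M (\<lambda>\<omega>. \<Prod>i\<in>B. Z (g i) \<omega>)"
proof -
  define n where "n = card B"
  obtain \<tau> where tau: "bij_betw \<tau> {..<n} B"
    using ex_bij_betw_nat_finite[OF fin] unfolding n_def by (auto simp: atLeast0LessThan)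
  define t where "t = (\<lambda>i. g (\<tau> i))"
  define F where "F = (\<lambda>x::nat \<Rightarrow> real. \<Prod>i<n. x i)"
  have Fm: "F \<in> borel_measurable (PiM {..<n} (\<lambda>_. borel))"
    unfolding F_def by measurable
  have key: "integral\<^sup>L M (\<lambda>\<omega>. \<Prod>i\<in>B. Z (g i + u) \<omega>)
      = integral\<^sup>L (distr M (PiM {..<n} (\<lambda>_. borel)) (\<lambda>\<omega>. \<lambda>i\<in>{..<n}. Z (t i + u) \<omega>)) F" for u
  proof -
    have Tm: "(\<lambda>\<omega>. \<lambda>i\<in>{..<n}. Z (t i + u) \<omega>) \<in> measurable M (PiM {..<n} (\<lambda>_. borel))"
      by (rule measurable_restrict) (rule meas)
    have "(\<lambda>\<omega>. \<Prod>i\<in>B. Z (g i + u) \<omega>) = (\<lambda>\<omega>. F (\<lambda>i\<in>{..<n}. Z (t i + u) \<omega>))"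
    proof
      fix \<omega>
      have "(\<Prod>i\<in>B. Z (g i + u) \<omega>) = (\<Prod>i\<in>{..<n}. Z (g (\<tau> i) + u) \<omega>)"
        using prod.reindex_bij_betw[OF tau, of "\<lambda>i. Z (g i + u) \<omega>"] by simp
      then show "(\<Prod>i\<in>B. Z (g i + u) \<omega>) = F (\<lambda>i\<in>{..<n}. Z (t i + u) \<omega>)"
        unfolding F_def t_def by simp
    qed
    then show ?thesis using integral_distr[OF Tm Fm] by simp
  qed
  have "stationary_seq M Z" by fact
  then have "distr M (PiM {..<n} (\<lambda>_. borel)) (\<lambda>\<omega>. \<lambda>i\<in>{..<n}. Z (t i + s) \<omega>)
      = distr M (PiM {..<n} (\<lambda>_. borel)) (\<lambda>\<omega>. \<lambda>i\<in>{..<n}. Z (t i + 0) \<omega>)"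
    unfolding stationary_seq_def by simp
  then show ?thesis using key[of s] key[of 0] by simp
qed

lemma cum_shift:
  assumes stat: "stationary_seq M Z" and meas: "\<And>j. Z j \<in> borel_measurable M" and fin: "finite A"
  shows "cumulant M (\<lambda>i. Z (g i + s)) A = cumulant M (\<lambda>i. Z (g i)) A"
  unfolding cumulant_def
proof (intro sum.cong refl arg_cong2[where f="(*)"] prod.cong)
  fix P B assume "P \<in> {P. partition_on A P}" "B \<in> P"
  then have "B \<subseteq> A" by (auto dest: partition_onD1)
  then have "finite B" using fin finite_subset by blast
  then show "integral\<^sup>L M (\<lambda>\<omega>. \<Prod>i\<in>B. Z (g i + s) \<omega>) = integral\<^sup>L M (\<lambda>\<omega>. \<Prod>i\<in>B. Z (g i) \<omega>)"
    by (rule moment_shift[OF stat meas])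
qed



definition Dom :: "nat \<Rightarrow> (nat \<Rightarrow> int) set" where
  "Dom r = {js. \<forall>i. i \<notin> {1..r} \<longrightarrow> js i = 0}"

lemma bij_pointed:
  assumes "finite A" "card A = Suc r" "a \<in> A"
  obtains \<sigma> where "bij_betw \<sigma> {0..r} A" "\<sigma> 0 = a"
proof -
  have "card (A - {a}) = r" using assms by simp
  then obtain h where h: "bij_betw h {1..r} (A - {a})"
    using ex_bij_betw_nat_finite_1[of "A - {a}"] assms(1) by auto
  have hi: "inj_on h {1..r}" "h ` {1..r} = A - {a}" using h by (auto simp: bij_betw_def)
  define \<sigma> where "\<sigma> i = (if i = 0 then a else h i)" for i
  have s1: "\<sigma> i = h i" if "i \<in> {1..r}" for i using that by (simp add: \<sigma>_def)
  have ha: "h i \<noteq> a" if "i \<in> {1..r}" for i proof -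
    have "h i \<in> h ` {1..r}" using that by (rule imageI)
    then show ?thesis using hi(2) by simp
  qed
  have "bij_betw \<sigma> {0..r} A"
    unfolding bij_betw_def
  proof
    show "inj_on \<sigma> {0..r}"
    proof (rule inj_onI)
      fix x y assume xy: "x \<in> {0..r}" "y \<in> {0..r}" "\<sigma> x = \<sigma> y"
      show "x = y"
      proof (cases "x = 0")
        case True
        show ?thesis
        proof (rule ccontr)
          assume "x \<noteq> y"
          then have y1: "y \<in> {1..r}" using xy True by auto
          then have "\<sigma> y \<noteq> a" using s1 ha by simp
          then show False using xy(3) True by (simp add: \<sigma>_def)
        qed
      next
        case False
        then have x1: "x \<in> {1..r}" using xy by auto
        show ?thesis
        proof (cases "y = 0")
          case True
          have "\<sigma> x \<noteq> a" using s1 ha x1 by simp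
          then show ?thesis using xy(3) True by (simp add: \<sigma>_def)
        next
          case False
          then have y1: "y \<in> {1..r}" using xy by auto
          then have "h x = h y" using xy(3) s1 x1 by simp
          then show ?thesis using inj_onD[OF hi(1)] x1 y1 by blast
        qed
      qed
    qed
    have e1: "{0..r} = insert 0 {1..r}" by auto
    have e2: "\<sigma> ` {1..r} = h ` {1..r}" by (rule image_cong) (simp_all add: s1)
    have "\<sigma> ` {0..r} = insert a (h ` {1..r})" unfolding e1 image_insert e2 by (simp add: \<sigma>_def)
    also have "\<dots> = A" using hi(2) assms(3) by (simp add: insert_absorb)
    finally show "\<sigma> ` {0..r} = A" .
  qed
  then show ?thesis by (rule that) (simp add: \<sigma>_def)
qed

lemma KL:
  fixes A :: "nat set" and F :: "(nat \<Rightarrow> int) set"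
  assumes stat: "stationary_seq M Z" and meas: "\<And>j. Z j \<in> borel_measurable M"
    and summ: "(\<lambda>js. \<bar>cumulant M (\<lambda>i. Z (js i)) {0..r}\<bar>) summable_on Dom r"
    and fin: "finite A" and cA: "card A = Suc r" and aA: "a \<in> A"
    and finF: "finite F" and same: "\<And>g. g \<in> F \<Longrightarrow> g a = s0"
    and inj: "inj_on (\<lambda>g. restrict g A) F"
  shows "(\<Sum>g\<in>F. \<bar>cumulant M (\<lambda>i. Z (g i)) A\<bar>)
     \<le> infsum (\<lambda>js. \<bar>cumulant M (\<lambda>i. Z (js i)) {0..r}\<bar>) (Dom r)"
proof -
  obtain \<sigma> where sig: "bij_betw \<sigma> {0..r} A" "\<sigma> 0 = a" using bij_pointed[OF fin cA aA] by blast
  define \<phi> where "\<phi> g = (\<lambda>i. if i \<in> {1..r} then g (\<sigma> i) - s0 else 0)" for g :: "nat \<Rightarrow> int"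
  have eq: "cumulant M (\<lambda>i. Z (g i)) A = cumulant M (\<lambda>i. Z (\<phi> g i)) {0..r}" if g: "g \<in> F" for g
  proof -
    have "cumulant M (\<lambda>i. Z (g i)) A = cumulant M (\<lambda>i. Z (g i + (- s0))) A"
      by (rule cum_shift[OF stat meas fin, symmetric])
    also have "\<dots> = cumulant M (\<lambda>i. Z (g (\<sigma> i) + (- s0))) {0..r}"
      by (rule cum_reindex[OF sig(1)])
    also have "\<dots> = cumulant M (\<lambda>i. Z (\<phi> g i)) {0..r}"
    proof (rule cum_cong)
      fix i assume "i \<in> {0..r}"
      then show "Z (g (\<sigma> i) + - s0) = Z (\<phi> g i)"
        using same[OF g] sig(2) by (cases "i = 0") (auto simp: \<phi>_def)
    qed
    finally show ?thesis .
  qed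
  have injphi: "inj_on \<phi> F"
  proof (rule inj_onI)
    fix g1 g2 assume g: "g1 \<in> F" "g2 \<in> F" "\<phi> g1 = \<phi> g2"
    have "g1 x = g2 x" if "x \<in> A" for x
    proof -
      obtain i where i: "i \<in> {0..r}" "x = \<sigma> i" using sig(1) \<open>x \<in> A\<close> by (auto simp: bij_betw_def)
      show ?thesis
      proof (cases "i = 0")
        case True then show ?thesis using i same g sig(2) by auto
      next
        case False
        then have "\<phi> g1 i = g1 x - s0" "\<phi> g2 i = g2 x - s0" using i by (auto simp: \<phi>_def)
        then show ?thesis using g(3) by simp
      qed
    qed
    then have "restrict g1 A = restrict g2 A" by (auto simp: restrict_def fun_eq_iff)
    then show "g1 = g2" using inj g unfolding inj_on_def by blast
  qed
  have sub: "\<phi> ` F \<subseteq> Dom r" by (auto simp: Dom_def \<phi>_def)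
  have "(\<Sum>g\<in>F. \<bar>cumulant M (\<lambda>i. Z (g i)) A\<bar>) = (\<Sum>g\<in>F. \<bar>cumulant M (\<lambda>i. Z (\<phi> g i)) {0..r}\<bar>)"
    using eq by simp
  also have "\<dots> = (\<Sum>js\<in>\<phi> ` F. \<bar>cumulant M (\<lambda>i. Z (js i)) {0..r}\<bar>)"
    by (simp add: sum.reindex[OF injphi])
  also have "\<dots> \<le> infsum (\<lambda>js. \<bar>cumulant M (\<lambda>i. Z (js i)) {0..r}\<bar>) (Dom r)"
    by (rule finite_sum_le_infsum[OF summ]) (use finF sub in auto)
  finally show ?thesis .
qed



definition Dset :: "nat set set \<Rightarrow> nat \<Rightarrow> nat set \<Rightarrow> (nat \<Rightarrow> int) set" where
  "Dset Q e0 S = {g. (\<forall>i. i \<notin> S \<longrightarrow> g i = 0) \<and> measurable_wrt Q g \<and> g e0 = 0}"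

lemma sb_step:
  assumes "measurable_wrt Q g" "(x, y) \<in> same_block Q"
  shows "g x = g y"
  using assms by (auto simp: measurable_wrt_def same_block_def)

lemma sb_sym: "(x, y) \<in> same_block Q \<Longrightarrow> (y, x) \<in> same_block Q"
  by (auto simp: same_block_def)

lemma agree_closure:
  assumes "(x, i) \<in> (same_block Q)\<^sup>*" "measurable_wrt Q g1" "measurable_wrt Q g2" "g1 x = g2 x"
  shows "g1 i = g2 i"
  using assms(1)
proof (induction rule: rtrancl_induct)
  case base then show ?case using assms(4) .
next
  case (step y z)
  then show ?case using sb_step[OF assms(2) step(2)] sb_step[OF assms(3) step(2)] by simp
qed

lemma core_step:
  fixes c :: "nat set \<Rightarrow> (nat \<Rightarrow> int) \<Rightarrow> real" and L :: real
  assumes finP: "finite P"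
    and cong: "\<And>A g g'. A \<in> P \<Longrightarrow> (\<And>i. i \<in> A \<Longrightarrow> g i = g' i) \<Longrightarrow> c A g = c A g'"
    and KLh: "\<And>A a F s. A \<in> P \<Longrightarrow> a \<in> A \<Longrightarrow> finite F \<Longrightarrow> (\<And>g. g \<in> F \<Longrightarrow> g a = s)
               \<Longrightarrow> inj_on (\<lambda>g. restrict g A) F \<Longrightarrow> (\<Sum>g\<in>F. \<bar>c A g\<bar>) \<le> L"
    and L0: "0 \<le> L"
    and AA: "\<A> \<subseteq> P" and A'P: "A' \<in> P" and A'n: "A' \<notin> \<A>"
    and meet: "A' \<inter> (same_block Q)\<^sup>* `` (insert e0 (\<Union>\<A>)) \<noteq> {}"
    and IH: "\<And>F. finite F \<Longrightarrow> F \<subseteq> Dset Q e0 ((same_block Q)\<^sup>* `` (insert e0 (\<Union>\<A>))) \<Longrightarrow>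
              (\<Sum>g\<in>F. \<Prod>A\<in>\<A>. \<bar>c A g\<bar>) \<le> L ^ card \<A>"
    and finF: "finite F" and FD: "F \<subseteq> Dset Q e0 ((same_block Q)\<^sup>* `` (insert e0 (\<Union>(insert A' \<A>))))"
  shows "(\<Sum>g\<in>F. \<Prod>A\<in>insert A' \<A>. \<bar>c A g\<bar>) \<le> L ^ card (insert A' \<A>)"
proof -
  define X where "X = insert e0 (\<Union>\<A>)"
  define S where "S = (same_block Q)\<^sup>* `` X"
  define S' where "S' = (same_block Q)\<^sup>* `` (insert e0 (\<Union>(insert A' \<A>)))"
  have X'eq: "insert e0 (\<Union>(insert A' \<A>)) = X \<union> A'" by (auto simp: X_def)
  have XS: "X \<subseteq> S" by (auto simp: S_def)
  have finA: "finite \<A>" using AA finP finite_subset by blast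
  define \<rho> where "\<rho> g = (\<lambda>i. if i \<in> S then g i else 0)" for g :: "nat \<Rightarrow> int"
  have Sclosed: "y \<in> S" if "x \<in> S" "(x, y) \<in> same_block Q" for x y
    using that unfolding S_def by (meson Image_iff rtrancl.rtrancl_into_rtrancl)
  have rhoD: "\<rho> g \<in> Dset Q e0 S" if "g \<in> F" for g
  proof -
    have gD: "measurable_wrt Q g" "g e0 = 0" using that FD by (auto simp: Dset_def)
    have "measurable_wrt Q (\<rho> g)"
      unfolding measurable_wrt_def
    proof (intro ballI)
      fix B x y assume B: "B \<in> Q" "x \<in> B" "y \<in> B"
      then have xy: "(x, y) \<in> same_block Q" "(y, x) \<in> same_block Q" by (auto simp: same_block_def)
      show "\<rho> g x = \<rho> g y"
      proof (cases "x \<in> S")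
        case True
        then have "y \<in> S" using Sclosed xy by blast
        then show ?thesis using True sb_step[OF gD(1) xy(1)] by (simp add: \<rho>_def)
      next
        case False
        then have "y \<notin> S" using Sclosed xy by blast
        then show ?thesis using False by (simp add: \<rho>_def)
      qed
    qed
    moreover have "e0 \<in> S" using XS by (auto simp: X_def)
    ultimately show ?thesis using gD by (auto simp: Dset_def \<rho>_def)
  qed
  have prodrho: "(\<Prod>A\<in>\<A>. \<bar>c A g\<bar>) = (\<Prod>A\<in>\<A>. \<bar>c A (\<rho> g)\<bar>)" for g
  proof (rule prod.cong[OF refl])
    fix A assume A: "A \<in> \<A>"
    have "c A g = c A (\<rho> g)"
    proof (rule cong)
      show "A \<in> P" using A AA by blast
      fix i assume "i \<in> A"
      then have "i \<in> S" using A XS by (auto simp: X_def)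
      then show "g i = \<rho> g i" by (simp add: \<rho>_def)
    qed
    then show "\<bar>c A g\<bar> = \<bar>c A (\<rho> g)\<bar>" by simp
  qed
  obtain a where a: "a \<in> A'" "a \<in> S" using meet unfolding S_def X_def by blast
  have fiber: "(\<Sum>g\<in>{g\<in>F. \<rho> g = h}. \<bar>c A' g\<bar>) \<le> L" for h
  proof (rule KLh[OF A'P a(1)])
    show "finite {g \<in> F. \<rho> g = h}" using finF by simp
    fix g assume "g \<in> {g \<in> F. \<rho> g = h}"
    then show "g a = h a" using a(2) by (auto simp: \<rho>_def)
  next
    show "inj_on (\<lambda>g. restrict g A') {g \<in> F. \<rho> g = h}"
    proof (rule inj_onI)
      fix g1 g2 assume g: "g1 \<in> {g \<in> F. \<rho> g = h}" "g2 \<in> {g \<in> F. \<rho> g = h}"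
        and r: "restrict g1 A' = restrict g2 A'"
      have D1: "g1 \<in> Dset Q e0 S'" and D2: "g2 \<in> Dset Q e0 S'" using g FD by (auto simp: S'_def)
      have m: "measurable_wrt Q g1" "measurable_wrt Q g2" using D1 D2 by (auto simp: Dset_def)
      show "g1 = g2"
      proof
        fix i
        show "g1 i = g2 i"
        proof (cases "i \<in> S'")
          case False then show ?thesis using D1 D2 by (auto simp: Dset_def)
        next
          case True
          then obtain x where x: "x \<in> X \<union> A'" "(x, i) \<in> (same_block Q)\<^sup>*"
            unfolding S'_def X'eq by blast
          have "g1 x = g2 x"
          proof (cases "x \<in> A'")
            case True
            then show ?thesis using r by (metis restrict_apply')
          next
            case False
            then have "x \<in> S" using x(1) XS by blast
            moreover have "\<rho> g1 x = \<rho> g2 x" using g by simp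
            ultimately show ?thesis by (simp add: \<rho>_def)
          qed
          then show ?thesis using agree_closure[OF x(2) m] by simp
        qed
      qed
    qed
  qed
  have nn: "0 \<le> (\<Prod>A\<in>\<A>. \<bar>c A h\<bar>)" for h by (simp add: prod_nonneg)
  have "(\<Sum>g\<in>F. \<Prod>A\<in>insert A' \<A>. \<bar>c A g\<bar>) = (\<Sum>g\<in>F. \<bar>c A' g\<bar> * (\<Prod>A\<in>\<A>. \<bar>c A (\<rho> g)\<bar>))"
    using finA A'n prodrho by (simp add: prod.insert)
  also have "\<dots> = (\<Sum>h\<in>\<rho> ` F. \<Sum>g\<in>{g\<in>F. \<rho> g = h}. \<bar>c A' g\<bar> * (\<Prod>A\<in>\<A>. \<bar>c A (\<rho> g)\<bar>))"
    by (rule sum.image_gen[OF finF])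
  also have "\<dots> = (\<Sum>h\<in>\<rho> ` F. (\<Prod>A\<in>\<A>. \<bar>c A h\<bar>) * (\<Sum>g\<in>{g\<in>F. \<rho> g = h}. \<bar>c A' g\<bar>))"
  proof (rule sum.cong[OF refl])
    fix h assume "h \<in> \<rho> ` F"
    have "(\<Sum>g\<in>{g\<in>F. \<rho> g = h}. \<bar>c A' g\<bar> * (\<Prod>A\<in>\<A>. \<bar>c A (\<rho> g)\<bar>))
        = (\<Sum>g\<in>{g\<in>F. \<rho> g = h}. \<bar>c A' g\<bar> * (\<Prod>A\<in>\<A>. \<bar>c A h\<bar>))"
      by (rule sum.cong) auto
    also have "\<dots> = (\<Prod>A\<in>\<A>. \<bar>c A h\<bar>) * (\<Sum>g\<in>{g\<in>F. \<rho> g = h}. \<bar>c A' g\<bar>)"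
      by (simp add: sum_distrib_left mult.commute)
    finally show "(\<Sum>g\<in>{g\<in>F. \<rho> g = h}. \<bar>c A' g\<bar> * (\<Prod>A\<in>\<A>. \<bar>c A (\<rho> g)\<bar>))
        = (\<Prod>A\<in>\<A>. \<bar>c A h\<bar>) * (\<Sum>g\<in>{g\<in>F. \<rho> g = h}. \<bar>c A' g\<bar>)" .
  qed
  also have "\<dots> \<le> (\<Sum>h\<in>\<rho> ` F. (\<Prod>A\<in>\<A>. \<bar>c A h\<bar>) * L)"
    by (rule sum_mono, rule mult_left_mono[OF fiber nn])
  also have "\<dots> = (\<Sum>h\<in>\<rho> ` F. (\<Prod>A\<in>\<A>. \<bar>c A h\<bar>)) * L"
    by (simp add: sum_distrib_right)
  also have "\<dots> \<le> L ^ card \<A> * L"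
  proof (rule mult_right_mono[OF _ L0])
    show "(\<Sum>h\<in>\<rho> ` F. \<Prod>A\<in>\<A>. \<bar>c A h\<bar>) \<le> L ^ card \<A>"
      by (rule IH) (use finF rhoD in \<open>auto simp: S_def X_def\<close>)
  qed
  also have "\<dots> = L ^ card (insert A' \<A>)" using finA A'n by simp
  finally show ?thesis .
qed


lemma core:
  fixes c :: "nat set \<Rightarrow> (nat \<Rightarrow> int) \<Rightarrow> real" and L :: real
  assumes finP: "finite P"
    and cong: "\<And>A g g'. A \<in> P \<Longrightarrow> (\<And>i. i \<in> A \<Longrightarrow> g i = g' i) \<Longrightarrow> c A g = c A g'"
    and KLh: "\<And>A a F s. A \<in> P \<Longrightarrow> a \<in> A \<Longrightarrow> finite F \<Longrightarrow> (\<And>g. g \<in> F \<Longrightarrow> g a = s)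
               \<Longrightarrow> inj_on (\<lambda>g. restrict g A) F \<Longrightarrow> (\<Sum>g\<in>F. \<bar>c A g\<bar>) \<le> L"
    and L0: "0 \<le> L"
    and partP: "partition_on E P" and e0: "e0 \<in> E"
    and conn: "E \<subseteq> (same_block P \<union> same_block Q)\<^sup>* `` {e0}"
    and finF: "finite F" and FD: "F \<subseteq> Dset Q e0 E"
  shows "(\<Sum>g\<in>F. \<Prod>A\<in>P. \<bar>c A g\<bar>) \<le> L ^ card P"
proof -
  define S where "S \<A> = (same_block Q)\<^sup>* `` (insert e0 (\<Union>\<A>))" for \<A>
  define good where "good \<A> \<longleftrightarrow> (\<forall>F. finite F \<longrightarrow> F \<subseteq> Dset Q e0 (S \<A>) \<longrightarrow>
      (\<Sum>g\<in>F. \<Prod>A\<in>\<A>. \<bar>c A g\<bar>) \<le> L ^ card \<A>)" for \<A>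
  have claim: "n \<le> card P \<Longrightarrow> \<exists>\<A>\<subseteq>P. card \<A> = n \<and> good \<A>" for n
  proof (induction n)
    case 0
    have "good {}"
      unfolding good_def
    proof (intro allI impI)
      fix F :: "(nat \<Rightarrow> int) set" assume F: "finite F" "F \<subseteq> Dset Q e0 (S {})"
      have "F \<subseteq> {\<lambda>_. 0}"
      proof
        fix g assume "g \<in> F"
        then have gD: "g \<in> Dset Q e0 (S {})" using F by blast
        have "g i = 0" for i
        proof (cases "i \<in> S {}")
          case False then show ?thesis using gD by (auto simp: Dset_def)
        next
          case True
          then have "(e0, i) \<in> (same_block Q)\<^sup>*" by (simp add: S_def)
          moreover have "measurable_wrt Q g" "g e0 = 0" using gD by (auto simp: Dset_def)
          moreover have "measurable_wrt Q (\<lambda>_::nat. 0::int)" by (simp add: measurable_wrt_def)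
          ultimately show ?thesis using agree_closure[of e0 i Q g "\<lambda>_. 0"] by simp
        qed
        then show "g \<in> {\<lambda>_. 0}" by auto
      qed
      then have "card F \<le> card {\<lambda>_::nat. 0::int}" by (rule card_mono[rotated]) simp
      then have "card F \<le> 1" by simp
      then show "(\<Sum>g\<in>F. \<Prod>A\<in>{}. \<bar>c A g\<bar>) \<le> L ^ card {}" by simp
    qed
    then show ?case by auto
  next
    case (Suc n)
    then obtain \<A> where A: "\<A> \<subseteq> P" "card \<A> = n" "good \<A>" by auto
    have "\<exists>A'\<in>P - \<A>. A' \<inter> S \<A> \<noteq> {}"
    proof (rule ccontr)
      assume no: "\<not> ?thesis"
      have closed: "y \<in> S \<A>" if "(e0, y) \<in> (same_block P \<union> same_block Q)\<^sup>*" for y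
        using that
      proof (induction rule: rtrancl_induct)
        case base then show ?case by (auto simp: S_def)
      next
        case (step x y)
        show ?case
        proof (cases "(x, y) \<in> same_block Q")
          case True
          then show ?thesis using step(3) unfolding S_def by (meson Image_iff rtrancl.rtrancl_into_rtrancl)
        next
          case False
          then have "(x, y) \<in> same_block P" using step(2) by blast
          then obtain B where B: "B \<in> P" "x \<in> B" "y \<in> B" by (auto simp: same_block_def)
          show ?thesis
          proof (cases "B \<in> \<A>")
            case True then show ?thesis using B by (auto simp: S_def)
          next
            case False
            then have "B \<inter> S \<A> = {}" using no B(1) by blast
            then show ?thesis using B(2) step(3) by blast
          qed
        qed
      qed
      have "card \<A> < card P" using A Suc by simp
      then have "\<A> \<noteq> P" by auto
      then obtain A' where A': "A' \<in> P" "A' \<notin> \<A>" using A(1) by blast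
      have "A' \<noteq> {}" using partition_onD3[OF partP] A' by blast
      then obtain y where "y \<in> A'" by blast
      then have "y \<in> E" using partition_onD1[OF partP] A' by blast
      then have "y \<in> S \<A>" using conn closed by blast
      then show False using no A' \<open>y \<in> A'\<close> by blast
    qed
    then obtain A' where A': "A' \<in> P" "A' \<notin> \<A>" "A' \<inter> S \<A> \<noteq> {}" by blast
    have finA: "finite \<A>" using A(1) finP finite_subset by blast
    have "good (insert A' \<A>)"
      unfolding good_def
    proof (intro allI impI)
      fix F :: "(nat \<Rightarrow> int) set" assume F: "finite F" "F \<subseteq> Dset Q e0 (S (insert A' \<A>))"
      show "(\<Sum>g\<in>F. \<Prod>A\<in>insert A' \<A>. \<bar>c A g\<bar>) \<le> L ^ card (insert A' \<A>)"
      proof (rule core_step[OF finP cong KLh L0 A(1) A'(1) A'(2)])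
        show "A' \<inter> (same_block Q)\<^sup>* `` insert e0 (\<Union> \<A>) \<noteq> {}" using A'(3) by (simp add: S_def)
        show "\<And>F. finite F \<Longrightarrow> F \<subseteq> Dset Q e0 ((same_block Q)\<^sup>* `` insert e0 (\<Union> \<A>)) \<Longrightarrow>
          (\<Sum>g\<in>F. \<Prod>A\<in>\<A>. \<bar>c A g\<bar>) \<le> L ^ card \<A>" using A(3) by (simp add: good_def S_def)
        show "finite F" by fact
        show "F \<subseteq> Dset Q e0 ((same_block Q)\<^sup>* `` insert e0 (\<Union> (insert A' \<A>)))" using F(2) by (simp add: S_def)
      qed
    qed
    moreover have "card (insert A' \<A>) = Suc n" using finA A'(2) A(2) by simp
    ultimately show ?case using A(1) A'(1) by (intro exI[of _ "insert A' \<A>"]) auto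
  qed
  obtain \<A> where A: "\<A> \<subseteq> P" "card \<A> = card P" "good \<A>" using claim[of "card P"] by auto
  have AP: "\<A> = P" using card_subset_eq[OF finP A(1) A(2)] .
  have "Dset Q e0 E \<subseteq> Dset Q e0 (S P)"
  proof
    fix g assume g: "g \<in> Dset Q e0 E"
    have "E \<subseteq> S P" using partition_onD1[OF partP] by (auto simp: S_def)
    then show "g \<in> Dset Q e0 (S P)" using g by (auto simp: Dset_def)
  qed
  then show ?thesis using A(3) AP finF FD unfolding good_def by blast
qed



lemma Kidx_Suc: "Kidx kk (Suc a) = Kidx kk a + 2 * kk (Suc a)"
  by (simp add: Kidx_def sum.cl_ivl_Suc)

lemma Kidx_mono: "a \<le> b \<Longrightarrow> Kidx kk a \<le> Kidx kk b"
  unfolding Kidx_def by (intro mult_left_mono sum_mono2) auto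

lemma Pi1_sub:
  assumes k: "k = (\<Sum>\<alpha>\<in>{1..r}. kk \<alpha>)" and pos: "\<forall>\<alpha>\<in>{1..r}. 1 \<le> kk \<alpha>"
    and B: "B \<in> Pi1 r kk"
  shows "B \<subseteq> {1..2*k}"
proof -
  have Kr: "Kidx kk r = 2 * k" using k by (simp add: Kidx_def)
  obtain \<alpha> where a: "\<alpha> \<in> {1..r}" and B': "B \<in> {{Kidx kk (\<alpha> - 1) + 2*\<nu>, Kidx kk (\<alpha> - 1) + 2*\<nu> + 1} | \<nu>. 1 \<le> \<nu> \<and> \<nu> \<le> kk \<alpha> - 1}
      \<union> {{Kidx kk \<alpha>, Kidx kk (\<alpha> - 1) + 1}}"
    using B unfolding Pi1_def by blast
  obtain m where m: "\<alpha> = Suc m" using a by (cases \<alpha>) auto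
  have KS: "Kidx kk \<alpha> = Kidx kk m + 2 * kk \<alpha>" using Kidx_Suc m by simp
  have Ka: "Kidx kk \<alpha> \<le> 2 * k" using Kidx_mono[of \<alpha> r kk] a Kr by simp
  have ka: "1 \<le> kk \<alpha>" using pos a by blast
  show ?thesis
    using B'
  proof
    assume "B \<in> {{Kidx kk (\<alpha> - 1) + 2*\<nu>, Kidx kk (\<alpha> - 1) + 2*\<nu> + 1} | \<nu>. 1 \<le> \<nu> \<and> \<nu> \<le> kk \<alpha> - 1}"
    then obtain \<nu> where "B = {Kidx kk m + 2*\<nu>, Kidx kk m + 2*\<nu> + 1}" "1 \<le> \<nu>" "\<nu> \<le> kk \<alpha> - 1"
      using m by auto
    then show ?thesis using KS Ka ka by auto
  next
    assume "B \<in> {{Kidx kk \<alpha>, Kidx kk (\<alpha> - 1) + 1}}"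
    then have "B = {Kidx kk \<alpha>, Kidx kk m + 1}" using m by auto
    then show ?thesis using KS Ka ka by auto
  qed
qed

lemma pjoin_one:
  assumes partP: "partition_on {1..m} P" and Qsub: "\<And>B. B \<in> Q \<Longrightarrow> B \<subseteq> {1..m}"
    and m: "1 \<le> m" and c1: "card (pjoin m Q P) = 1"
  shows "{1..m} \<subseteq> (same_block P \<union> same_block Q)\<^sup>* `` {1}"
    and "pjoin m Q P = {{1..m}}"
proof -
  define R where "R = same_block Q \<union> same_block P"
  have pj: "pjoin m Q P = {1..m} // R\<^sup>*" by (simp add: pjoin_def R_def)
  have RE: "(x, y) \<in> R \<Longrightarrow> y \<in> {1..m}" for x y
  proof -
    assume "(x, y) \<in> R"
    then obtain B where "B \<in> Q \<union> P" "y \<in> B" by (auto simp: R_def same_block_def)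
    moreover have "B \<subseteq> {1..m}" if "B \<in> Q \<union> P" for B
      using that Qsub partition_onD1[OF partP] by blast
    ultimately show "y \<in> {1..m}" by blast
  qed
  have one: "1 \<in> {1..m}" using m by simp
  obtain C where C: "pjoin m Q P = {C}" using c1 card_1_singletonE by blast
  have "R\<^sup>* `` {y} = C" if "y \<in> {1..m}" for y
    using quotientI[OF that, of "R\<^sup>*"] C pj by simp
  then have all: "y \<in> R\<^sup>* `` {1}" if "y \<in> {1..m}" for y
    using that one by (metis Image_singleton_iff rtrancl.rtrancl_refl)
  have sub: "R\<^sup>* `` {1} \<subseteq> {1..m}"
  proof
    fix y assume "y \<in> R\<^sup>* `` {1}"
    then have "(1, y) \<in> R\<^sup>*" by simp
    then show "y \<in> {1..m}"
      by (cases rule: rtranclE) (use one RE in auto)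
  qed
  have R': "R = same_block P \<union> same_block Q" by (auto simp: R_def)
  show "{1..m} \<subseteq> (same_block P \<union> same_block Q)\<^sup>* `` {1}" using all R' by blast
  have "C = R\<^sup>* `` {1}" using quotientI[OF one, of "R\<^sup>*"] C pj by simp
  also have "\<dots> = {1..m}" using all sub by blast
  finally show "pjoin m Q P = {{1..m}}" using C by simp
qed

lemma f_shift:
  assumes stat: "stationary_seq M Z" and meas: "\<And>j. Z j \<in> borel_measurable M"
    and partP: "partition_on E P" and finE: "finite E"
    and sh: "\<And>i. i \<in> E \<Longrightarrow> j' i = j i + s"
  shows "CPi M Z P j' = CPi M Z P j"
  unfolding CPi_def
proof (rule prod.cong[OF refl])
  fix A assume A: "A \<in> P"
  then have AE: "A \<subseteq> E" using partition_onD1[OF partP] by blast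
  then have finA: "finite A" using finE finite_subset by blast
  have "cumulant M (\<lambda>i. Z (j' i)) A = cumulant M (\<lambda>i. Z (j i + s)) A"
    by (rule cum_cong) (use AE sh in auto)
  also have "\<dots> = cumulant M (\<lambda>i. Z (j i)) A" by (rule cum_shift[OF stat meas finA])
  finally show "cumulant M (\<lambda>i. Z (j' i)) A = cumulant M (\<lambda>i. Z (j i)) A" .
qed



lemma int_cs:
  fixes f :: "'a \<Rightarrow> real"
  assumes "integrable (count_space A) f"
  shows "integral\<^sup>L (count_space A) f = infsum f A"
proof -
  have "Infinite_Set_Sum.abs_summable_on f A"
    using assms by (simp add: Infinite_Set_Sum.abs_summable_on_def)
  then show ?thesis using infsetsum_infsum[of f A] by (simp add: infsetsum_def)
qed

lemma int_cs2:
  fixes f :: "'a \<Rightarrow> real"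
  assumes "(\<lambda>x. \<bar>f x\<bar>) summable_on A"
  shows "integrable (count_space A) f"
proof -
  have "(\<lambda>x. norm (f x)) summable_on A" using assms by simp
  then have "Infinite_Set_Sum.abs_summable_on f A" using abs_summable_equivalent by blast
  then show ?thesis by (simp add: Infinite_Set_Sum.abs_summable_on_def)
qed

lemma dom_conv_infsum:
  fixes f :: "'a \<Rightarrow> real" and w :: "nat \<Rightarrow> 'a \<Rightarrow> real"
  assumes summ: "(\<lambda>x. \<bar>f x\<bar>) summable_on A"
    and wb: "\<And>p x. x \<in> A \<Longrightarrow> 0 \<le> w p x \<and> w p x \<le> 1"
    and wl: "\<And>x. x \<in> A \<Longrightarrow> (\<lambda>p. w p x) \<longlonglongrightarrow> 1"
  shows "(\<lambda>p. infsum (\<lambda>x. f x * w p x) A) \<longlonglongrightarrow> infsum f A"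
proof -
  have intw: "integrable (count_space A) (\<lambda>x. \<bar>f x\<bar>)"
    by (rule int_cs2) (use summ in simp)
  have lim: "AE x in count_space A. (\<lambda>p. f x * w p x) \<longlonglongrightarrow> f x"
  proof (rule AE_I2)
    fix x assume "x \<in> space (count_space A)"
    then have "x \<in> A" by simp
    then show "(\<lambda>p. f x * w p x) \<longlonglongrightarrow> f x" using tendsto_mult[OF tendsto_const wl[of x], of "f x"] by simp
  qed
  have bnd: "AE x in count_space A. norm (f x * w p x) \<le> \<bar>f x\<bar>" for p
  proof (rule AE_I2)
    fix x assume "x \<in> space (count_space A)"
    then have "x \<in> A" by simp
    then have "0 \<le> w p x" "w p x \<le> 1" using wb by auto
    then show "norm (f x * w p x) \<le> \<bar>f x\<bar>"
      by (simp add: abs_mult mult_left_le)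
  qed
  have c1: "(\<lambda>p. integral\<^sup>L (count_space A) (\<lambda>x. f x * w p x)) \<longlonglongrightarrow> integral\<^sup>L (count_space A) f"
    by (rule integral_dominated_convergence[OF _ _ intw lim bnd]) simp_all
  have i2: "integrable (count_space A) (\<lambda>x. f x * w p x)" for p
    by (rule integrable_dominated_convergence2[OF _ _ intw lim bnd]) simp_all
  have i1: "integrable (count_space A) f" by (rule int_cs2[OF summ])
  show ?thesis using c1 unfolding int_cs[OF i1] int_cs[OF i2] .
qed



definition Wset :: "nat set set \<Rightarrow> nat \<Rightarrow> nat \<Rightarrow> (nat \<Rightarrow> nat) set" where
  "Wset Q m p = {j \<in> words p m. measurable_wrt Q j}"

definition nu :: "nat \<Rightarrow> (nat \<Rightarrow> nat) \<Rightarrow> nat \<Rightarrow> int" where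
  "nu m j = (\<lambda>i. if i \<in> {1..m} then int (j i) - int (j 1) else 0)"

definition Ncount :: "nat set set \<Rightarrow> nat \<Rightarrow> nat \<Rightarrow> (nat \<Rightarrow> int) \<Rightarrow> nat" where
  "Ncount Q m p g = card {j \<in> Wset Q m p. nu m j = g}"

lemma nu_out: "i \<notin> {1..m} \<Longrightarrow> nu m j i = 0"
  unfolding nu_def by (rule if_not_P)

lemma Wset_finite: "finite (Wset Q m p)"
  unfolding Wset_def words_def by (rule finite_subset[of _ "{1..m} \<rightarrow>\<^sub>E {1..p}"]) (blast, simp add: finite_PiE)

lemma nu_D:
  assumes m: "1 \<le> m" and Qsub: "\<And>B. B \<in> Q \<Longrightarrow> B \<subseteq> {1..m}" and j: "j \<in> Wset Q m p"
  shows "nu m j \<in> Dset Q 1 {1..m}"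
proof -
  have mj: "measurable_wrt Q j" using j by (simp add: Wset_def)
  have "measurable_wrt Q (nu m j)"
    unfolding measurable_wrt_def
  proof (intro ballI)
    fix B x y assume B: "B \<in> Q" "x \<in> B" "y \<in> B"
    then have "x \<in> {1..m}" "y \<in> {1..m}" using Qsub by blast+
    moreover have "j x = j y" using mj B unfolding measurable_wrt_def by blast
    ultimately show "nu m j x = nu m j y" by (simp add: nu_def)
  qed
  moreover have "nu m j 1 = 0" using m by (simp add: nu_def)
  moreover have "\<forall>i. i \<notin> {1..m} \<longrightarrow> nu m j i = 0" by (simp add: nu_def)
  ultimately show ?thesis unfolding Dset_def by blast
qed

lemma Ncount_le:
  assumes m: "1 \<le> m"
  shows "Ncount Q m p g \<le> p"
proof -
  let ?F = "{j \<in> Wset Q m p. nu m j = g}"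
  have "inj_on (\<lambda>j. j 1) ?F"
  proof (rule inj_onI)
    fix j j' assume jj: "j \<in> ?F" "j' \<in> ?F" "j 1 = j' 1"
    then have w: "j \<in> {1..m} \<rightarrow>\<^sub>E {1..p}" "j' \<in> {1..m} \<rightarrow>\<^sub>E {1..p}" unfolding Wset_def words_def by blast+
    show "j = j'"
    proof
      fix i
      show "j i = j' i"
      proof (cases "i \<in> {1..m}")
        case True
        have "nu m j i = nu m j' i" using jj by simp
        then show ?thesis using True jj(3) by (simp add: nu_def)
      next
        case False then show ?thesis using PiE_arb[OF w(1) False] PiE_arb[OF w(2) False] by simp
      qed
    qed
  qed
  moreover have "(\<lambda>j. j 1) ` ?F \<subseteq> {1..p}"
  proof
    fix x assume "x \<in> (\<lambda>j. j 1) ` ?F"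
    then obtain j where j: "j \<in> ?F" "x = j 1" by blast
    then have "j \<in> {1..m} \<rightarrow>\<^sub>E {1..p}" unfolding Wset_def words_def by blast
    moreover have "1 \<in> {1..m}" using m by simp
    ultimately show "x \<in> {1..p}" using j(2) by (metis PiE_mem)
  qed
  ultimately have "card ?F \<le> card {1..p}" by (rule card_inj_on_le) simp
  then show ?thesis by (simp add: Ncount_def)
qed

lemma Ncount_ge:
  assumes m: "1 \<le> m" and Qsub: "\<And>B. B \<in> Q \<Longrightarrow> B \<subseteq> {1..m}" and g: "g \<in> Dset Q 1 {1..m}"
  shows "real p - 2 * real_of_int (\<Sum>i\<in>{1..m}. \<bar>g i\<bar>) \<le> real (Ncount Q m p g)"
proof -
  define M where "M = (\<Sum>i\<in>{1..m}. \<bar>g i\<bar>)"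
  have M0: "0 \<le> M" unfolding M_def by (simp add: sum_nonneg)
  define Mn where "Mn = nat M"
  have gM: "\<bar>g i\<bar> \<le> int Mn" if "i \<in> {1..m}" for i
    using member_le_sum[of i "{1..m}" "\<lambda>i. \<bar>g i\<bar>"] that M0 by (simp add: Mn_def M_def)
  have gD: "\<forall>i. i \<notin> {1..m} \<longrightarrow> g i = 0" "measurable_wrt Q g" "g 1 = 0" using g by (auto simp: Dset_def)
  define J where "J t = restrict (\<lambda>i. nat (g i + int t)) {1..m}" for t :: nat
  let ?F = "{j \<in> Wset Q m p. nu m j = g}"
  let ?T = "{Mn+1..p - Mn}"
  have JF: "J t \<in> ?F" if t: "t \<in> ?T" for t
  proof -
    have t1: "Mn + 1 \<le> t" "t + Mn \<le> p" using t by auto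
    have rng: "1 \<le> g i + int t" "g i + int t \<le> int p" if "i \<in> {1..m}" for i
      using gM[OF that] t1 by auto
    have "J t \<in> words p m"
      unfolding words_def J_def
    proof (rule restrict_PiE_iff[THEN iffD2], intro ballI)
      fix i assume i: "i \<in> {1..m}"
      show "nat (g i + int t) \<in> {1..p}" using rng[OF i] by auto
    qed
    moreover have "measurable_wrt Q (J t)"
      unfolding measurable_wrt_def
    proof (intro ballI)
      fix B x y assume B: "B \<in> Q" "x \<in> B" "y \<in> B"
      then have "x \<in> {1..m}" "y \<in> {1..m}" using Qsub by blast+
      moreover have "g x = g y" using gD(2) B unfolding measurable_wrt_def by blast
      ultimately show "J t x = J t y" by (simp add: J_def)
    qed
    moreover have "nu m (J t) = g"
    proof
      fix i
      show "nu m (J t) i = g i"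
      proof (cases "i \<in> {1..m}")
        case True
        have one: "1 \<in> {1..m}" using m by simp
        have e1: "nu m (J t) i = int (J t i) - int (J t 1)" unfolding nu_def if_P[OF True] ..
        have e2: "J t i = nat (g i + int t)" unfolding J_def using True by (rule restrict_apply')
        have e3: "J t 1 = nat (g 1 + int t)" unfolding J_def using one by (rule restrict_apply')
        have e4: "int (nat (g i + int t)) = g i + int t" using rng[OF True] by simp
        show ?thesis unfolding e1 e2 e3 e4 gD(3) by simp
      next
        case False
        have a: "nu m (J t) i = 0" using False by (rule nu_out)
        have b: "g i = 0" using gD(1) False by simp
        show ?thesis using a b by simp
      qed
    qed
    ultimately show ?thesis by (simp add: Wset_def)
  qed
  have injJ: "inj_on J ?T"
  proof (rule inj_onI)
    fix t t' assume "J t = J t'"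
    then have "J t 1 = J t' 1" by simp
    then show "t = t'" using m gD(3) by (simp add: J_def)
  qed
  have finF: "finite ?F" using Wset_finite[of Q m p] by simp
  have "card ?T \<le> card ?F"
    by (rule card_inj_on_le[OF injJ _ finF]) (use JF in blast)
  moreover have "real p - 2 * real Mn \<le> real (card ?T)" by simp
  moreover have "real_of_int M = real Mn" using M0 by (simp add: Mn_def)
  ultimately show ?thesis by (simp add: Ncount_def M_def)
qed

lemma words_sum:
  fixes f :: "(nat \<Rightarrow> int) \<Rightarrow> real"
  assumes m: "1 \<le> m"
    and fsh: "\<And>j j' s. (\<And>i. i \<in> {1..m} \<Longrightarrow> j' i = j i + s) \<Longrightarrow> f j' = f j"
  shows "(\<Sum>j\<in>Wset Q m p. f (\<lambda>i. int (j i))) = (\<Sum>g\<in>nu m ` Wset Q m p. f g * real (Ncount Q m p g))"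
proof -
  have "(\<Sum>j\<in>Wset Q m p. f (\<lambda>i. int (j i))) = (\<Sum>j\<in>Wset Q m p. f (nu m j))"
  proof (rule sum.cong[OF refl])
    fix j
    show "f (\<lambda>i. int (j i)) = f (nu m j)"
      by (rule fsh[where s = "int (j 1)"]) (simp add: nu_def)
  qed
  also have "\<dots> = (\<Sum>g\<in>nu m ` Wset Q m p. \<Sum>j\<in>{j \<in> Wset Q m p. nu m j = g}. f (nu m j))"
    by (rule sum.image_gen[OF Wset_finite])
  also have "\<dots> = (\<Sum>g\<in>nu m ` Wset Q m p. f g * real (Ncount Q m p g))"
  proof (rule sum.cong[OF refl])
    fix g
    have "(\<Sum>j\<in>{j \<in> Wset Q m p. nu m j = g}. f (nu m j)) = (\<Sum>j\<in>{j \<in> Wset Q m p. nu m j = g}. f g)"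
      by (rule sum.cong) auto
    then show "(\<Sum>j\<in>{j \<in> Wset Q m p. nu m j = g}. f (nu m j)) = f g * real (Ncount Q m p g)"
      by (simp add: Ncount_def mult.commute)
  qed
  finally show ?thesis .
qed



definition Hset :: "nat set \<Rightarrow> (nat \<Rightarrow> int) set" where
  "Hset E = {h. (\<forall>i. i \<notin> E \<longrightarrow> h i = 0) \<and> (\<forall>x\<in>E. \<forall>y\<in>E. h x = h y)}"

lemma HsetD1: "h \<in> Hset E \<Longrightarrow> i \<notin> E \<Longrightarrow> h i = 0"
  unfolding Hset_def by blast

lemma HsetD2: "h \<in> Hset E \<Longrightarrow> x \<in> E \<Longrightarrow> y \<in> E \<Longrightarrow> h x = h y"
  unfolding Hset_def by blast

lemma HsetI: "(\<And>i. i \<notin> E \<Longrightarrow> h i = 0) \<Longrightarrow> (\<And>x y. x \<in> E \<Longrightarrow> y \<in> E \<Longrightarrow> h x = h y) \<Longrightarrow> h \<in> Hset E"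
  unfolding Hset_def by blast

lemma Hset_diff: "h \<in> Hset E \<Longrightarrow> d \<in> Hset E \<Longrightarrow> (\<lambda>i. h i - d i) \<in> Hset E"
proof (rule HsetI)
  fix i assume "h \<in> Hset E" "d \<in> Hset E" "i \<notin> E"
  then show "h i - d i = 0" using HsetD1 by (metis diff_zero)
next
  fix x y assume "h \<in> Hset E" "d \<in> Hset E" "x \<in> E" "y \<in> E"
  then show "h x - d x = h y - d y" using HsetD2 by metis
qed

lemma Hset_add: "h \<in> Hset E \<Longrightarrow> d \<in> Hset E \<Longrightarrow> (\<lambda>i. h i + d i) \<in> Hset E"
proof (rule HsetI)
  fix i assume "h \<in> Hset E" "d \<in> Hset E" "i \<notin> E"
  then show "h i + d i = 0" using HsetD1 by (metis add_0)
next
  fix x y assume "h \<in> Hset E" "d \<in> Hset E" "x \<in> E" "y \<in> E"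
  then show "h x + d x = h y + d y" using HsetD2 by metis
qed

lemma cosetE: "x \<in> coset H j \<Longrightarrow> (\<And>h. h \<in> H \<Longrightarrow> x = (\<lambda>i. j i + h i) \<Longrightarrow> P) \<Longrightarrow> P"
  unfolding coset_def by blast

lemma cosetI: "h \<in> H \<Longrightarrow> x = (\<lambda>i. j i + h i) \<Longrightarrow> x \<in> coset H j"
  unfolding coset_def by blast

lemma coset_eq:
  assumes d: "d \<in> Hset E" and jj: "\<And>i. j' i = j i + d i"
  shows "coset (Hset E) j = coset (Hset E) j'"
proof
  show "coset (Hset E) j \<subseteq> coset (Hset E) j'"
  proof
    fix x assume "x \<in> coset (Hset E) j"
    then obtain h where h: "h \<in> Hset E" "x = (\<lambda>i. j i + h i)" by (rule cosetE)
    have "(\<lambda>i. h i - d i) \<in> Hset E" using Hset_diff[OF h(1) d] .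
    moreover have "x = (\<lambda>i. j' i + (h i - d i))" using h(2) jj by simp
    ultimately show "x \<in> coset (Hset E) j'" by (rule cosetI)
  qed
  show "coset (Hset E) j' \<subseteq> coset (Hset E) j"
  proof
    fix x assume "x \<in> coset (Hset E) j'"
    then obtain h where h: "h \<in> Hset E" "x = (\<lambda>i. j' i + h i)" by (rule cosetE)
    have "(\<lambda>i. h i + d i) \<in> Hset E" using Hset_add[OF h(1) d] .
    moreover have "x = (\<lambda>i. j i + (h i + d i))" using h(2) jj by (simp add: algebra_simps)
    ultimately show "x \<in> coset (Hset E) j" by (rule cosetI)
  qed
qed

lemma self_in_coset: "j \<in> coset (Hset E) j"
proof (rule cosetI)
  show "(\<lambda>_. 0) \<in> Hset E" by (rule HsetI) simp_all
  show "j = (\<lambda>i. j i + 0)" by simp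
qed

lemma coset_const:
  assumes "j \<in> coset (Hset E) j0" "j' \<in> coset (Hset E) j0" "e \<in> E"
  shows "\<exists>s. \<forall>i\<in>E. j' i = j i + s"
proof -
  obtain h where h: "h \<in> Hset E" "j = (\<lambda>i. j0 i + h i)" using assms(1) by (rule cosetE)
  obtain h' where h': "h' \<in> Hset E" "j' = (\<lambda>i. j0 i + h' i)" using assms(2) by (rule cosetE)
  have "\<forall>i\<in>E. j' i = j i + (h' e - h e)"
  proof
    fix i assume i: "i \<in> E"
    have "h i = h e" "h' i = h' e" using HsetD2[OF h(1) i assms(3)] HsetD2[OF h'(1) i assms(3)] .
    then show "j' i = j i + (h' e - h e)" using h(2) h'(2) by simp
  qed
  then show ?thesis by blast
qed

lemma coset_inj:
  assumes "e \<in> E"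
  shows "inj_on (coset (Hset E)) (Dset Q e E)"
proof (rule inj_onI)
  fix g1 g2 assume g: "g1 \<in> Dset Q e E" "g2 \<in> Dset Q e E" "coset (Hset E) g1 = coset (Hset E) g2"
  have "g1 \<in> coset (Hset E) g2" using self_in_coset[of g1 E] g(3) by simp
  then obtain h where h: "h \<in> Hset E" "g1 = (\<lambda>i. g2 i + h i)" by (rule cosetE)
  have "g1 e = 0" "g2 e = 0" using g(1,2) unfolding Dset_def by blast+
  then have he: "h e = 0" using h(2) by (metis add_0 fun_cong)
  have "h i = 0" for i
  proof (cases "i \<in> E")
    case True
    then show ?thesis using HsetD2[OF h(1) True assms] he by simp
  next
    case False
    then show ?thesis using HsetD1[OF h(1)] by blast
  qed
  then show "g1 = g2" using h(2) by simp
qed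


theorem proposition6p4:
  fixes M :: "'a measure" and Z :: "int \<Rightarrow> 'a \<Rightarrow> real"
    and r k :: nat and kk :: "nat \<Rightarrow> nat" and P :: "nat set set"
  assumes "standing_assumptions M Z"
    and "1 \<le> r"
    and "\<forall>\<alpha>\<in>{1..r}. 1 \<le> kk \<alpha>"
    and "k = (\<Sum>\<alpha>\<in>{1..r}. kk \<alpha>)"
    and "P \<in> Part2 (2*k)"
    and "card (pjoin (2*k) (pjoin (2*k) (Pi0 k) (Pi1 r kk)) P) = 1"
    and "card (pjoin (2*k) (Pi1 r kk) P) = 1"
  shows "(\<forall>c\<in>quot (ZSig (2*k) (Pi1 r kk)) (ZSig (2*k) (pjoin (2*k) (Pi1 r kk) P)).
            \<forall>j\<in>c. \<forall>j'\<in>c. CPi M Z P j = CPi M Z P j')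
       \<and> ((\<lambda>c. \<bar>CPi M Z P (SOME j. j \<in> c)\<bar>) summable_on
            quot (ZSig (2*k) (Pi1 r kk)) (ZSig (2*k) (pjoin (2*k) (Pi1 r kk) P)))
       \<and> (\<lambda>p. (1 / real p) *
              (\<Sum>j\<in>{j \<in> words p (2*k). measurable_wrt (Pi1 r kk) j}.
                 CPi M Z P (\<lambda>i. int (j i))))
         \<longlonglongrightarrow> (\<Sum>\<^sub>\<infinity>c\<in>quot (ZSig (2*k) (Pi1 r kk)) (ZSig (2*k) (pjoin (2*k) (Pi1 r kk) P)).
                  CPi M Z P (SOME j. j \<in> c))"
proof -
  note SA = assms(1)[unfolded standing_assumptions_def]
  have meas: "\<And>j. Z j \<in> borel_measurable M" using SA by blast
  have stat: "stationary_seq M Z" using SA by blast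
  have summ: "\<And>rr. 1 \<le> rr \<Longrightarrow> (\<lambda>js. \<bar>cumulant M (\<lambda>i. Z (js i)) {0..rr}\<bar>) summable_on Dom rr"
    using SA unfolding Dom_def by blast
  define E where "E = {1..2*k}"
  define Q where "Q = Pi1 r kk"
  have "1 \<in> {1..r}" using assms(2) by simp
  then have "kk 1 \<le> k" unfolding assms(4) by (rule member_le_sum) simp_all
  moreover have "1 \<le> kk 1" using assms(3) \<open>1 \<in> {1..r}\<close> by blast
  ultimately have k1: "1 \<le> k" by simp
  have m1: "1 \<le> 2*k" using k1 by simp
  have oneE: "1 \<in> E" using k1 by (simp add: E_def)
  have finE: "finite E" by (simp add: E_def)
  have Qsub: "\<And>B. B \<in> Q \<Longrightarrow> B \<subseteq> {1..2*k}" unfolding Q_def using Pi1_sub[OF assms(4) assms(3)] by blast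
  have partP: "partition_on {1..2*k} P" using assms(5) by (simp add: Part2_def Part_def)
  have P2: "\<And>B. B \<in> P \<Longrightarrow> 2 \<le> card B" using assms(5) by (simp add: Part2_def)
  have finP: "finite P" using partition_onD1[OF partP] finite_UnionD[of P] by (metis finite_atLeastAtMost)
  have c7: "card (pjoin (2*k) Q P) = 1" using assms(7) by (simp add: Q_def)
  note pj = pjoin_one[OF partP Qsub m1 c7]
  have Heq: "ZSig (2*k) (pjoin (2*k) (Pi1 r kk) P) = Hset E"
    using pj(2) unfolding Q_def ZSig_def Hset_def measurable_wrt_def E_def by auto
  define G where "G = ZSig (2*k) (Pi1 r kk)"
  define G0 where "G0 = Dset Q 1 E"
  define f where "f = CPi M Z P"
  have fsh: "f j' = f j" if "\<And>i. i \<in> E \<Longrightarrow> j' i = j i + s" for j j' s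
    unfolding f_def by (rule f_shift[OF stat meas partP[folded E_def] finE that])
  have quot_eq: "quot G (Hset E) = coset (Hset E) ` G0"
  proof
    show "quot G (Hset E) \<subseteq> coset (Hset E) ` G0"
    proof
      fix c assume "c \<in> quot G (Hset E)"
      then obtain j where j: "j \<in> G" "c = coset (Hset E) j" unfolding quot_def by blast
      have jz: "\<And>i. i \<notin> E \<Longrightarrow> j i = 0" and jm: "measurable_wrt Q j"
        using j(1) unfolding G_def ZSig_def E_def Q_def by blast+
      define n where "n = (\<lambda>i. if i \<in> E then j i - j 1 else 0)"
      define d where "d = (\<lambda>i. if i \<in> E then - j 1 else (0::int))"
      have dH: "d \<in> Hset E" by (rule HsetI) (simp_all add: d_def)
      have nj: "n i = j i + d i" for i using jz[of i] by (cases "i \<in> E") (simp_all add: n_def d_def)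
      have "n \<in> G0"
        unfolding G0_def Dset_def
      proof (intro CollectI conjI allI impI)
        fix i assume "i \<notin> E" then show "n i = 0" by (simp add: n_def)
      next
        show "n 1 = 0" using oneE by (simp add: n_def)
      next
        show "measurable_wrt Q n"
          unfolding measurable_wrt_def
        proof (intro ballI)
          fix B x y assume B: "B \<in> Q" "x \<in> B" "y \<in> B"
          then have "x \<in> E" "y \<in> E" using Qsub unfolding E_def by blast+
          moreover have "j x = j y" using jm B unfolding measurable_wrt_def by blast
          ultimately show "n x = n y" by (simp add: n_def)
        qed
      qed
      moreover have "c = coset (Hset E) n" using j(2) coset_eq[OF dH nj] by simp
      ultimately show "c \<in> coset (Hset E) ` G0" by blast
    qed
    show "coset (Hset E) ` G0 \<subseteq> quot G (Hset E)"
    proof -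
      have "G0 \<subseteq> G" unfolding G0_def G_def Dset_def ZSig_def Q_def E_def by blast
      then show ?thesis unfolding quot_def by blast
    qed
  qed
  have part1: "\<forall>c\<in>quot G (Hset E). \<forall>j\<in>c. \<forall>j'\<in>c. f j = f j'"
  proof (intro ballI)
    fix c j j' assume c: "c \<in> quot G (Hset E)" and jc: "j \<in> c" "j' \<in> c"
    obtain j0 where "c = coset (Hset E) j0" using c unfolding quot_def by blast
    then obtain s where "\<forall>i\<in>E. j' i = j i + s" using coset_const[of j E j0 j' 1] jc oneE by blast
    then show "f j = f j'" using fsh[of j' j s] by simp
  qed
  have some_eq: "f (SOME j. j \<in> coset (Hset E) g) = f g" if g: "g \<in> G0" for g
  proof -
    have gc: "g \<in> coset (Hset E) g" by (rule self_in_coset)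
    then have "(SOME j. j \<in> coset (Hset E) g) \<in> coset (Hset E) g" by (rule someI[where P="\<lambda>j. j \<in> coset (Hset E) g"])
    moreover have "coset (Hset E) g \<in> quot G (Hset E)" using quot_eq g by blast
    ultimately show ?thesis using part1 gc by blast
  qed
  have injc: "inj_on (coset (Hset E)) G0" unfolding G0_def by (rule coset_inj[OF oneE])
  define Lr where "Lr rr = infsum (\<lambda>js. \<bar>cumulant M (\<lambda>i. Z (js i)) {0..rr}\<bar>) (Dom rr)" for rr
  define L where "L = (\<Sum>rr\<in>{1..2*k}. Lr rr)"
  have Lr0: "0 \<le> Lr rr" for rr unfolding Lr_def by (rule infsum_nonneg) simp
  have L0: "0 \<le> L" unfolding L_def using Lr0 by (simp add: sum_nonneg)
  have KLh: "(\<Sum>g\<in>F. \<bar>cumulant M (\<lambda>i. Z (g i)) A\<bar>) \<le> L"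
    if A: "A \<in> P" "a \<in> A" "finite F" "\<And>g. g \<in> F \<Longrightarrow> g a = s" "inj_on (\<lambda>g. restrict g A) F"
    for A a F s
  proof -
    have AE: "A \<subseteq> {1..2*k}" using partition_onD1[OF partP] A(1) by blast
    have finA: "finite A" using AE finite_subset by blast
    have "card A \<le> card {1..2*k}" using AE by (rule card_mono[rotated]) simp
    then have cle: "card A \<le> 2*k" by simp
    define rr where "rr = card A - 1"
    have cA: "card A = Suc rr" using P2[OF A(1)] by (simp add: rr_def)
    have rr: "1 \<le> rr" "rr \<in> {1..2*k}" using P2[OF A(1)] cle by (auto simp: rr_def)
    have "(\<Sum>g\<in>F. \<bar>cumulant M (\<lambda>i. Z (g i)) A\<bar>) \<le> Lr rr"
      unfolding Lr_def
      by (rule KL[where M=M and Z=Z and r=rr and A=A and a=a and F=F and ?s0.0=s]) (fact stat meas summ[OF rr(1)] finA cA A(2) A(3) A(4) A(5))+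
    also have "\<dots> \<le> L" unfolding L_def using rr(2) Lr0 by (intro member_le_sum) simp_all
    finally show ?thesis .
  qed
  have cong: "cumulant M (\<lambda>i. Z (g i)) A = cumulant M (\<lambda>i. Z (g' i)) A"
    if "A \<in> P" "\<And>i. i \<in> A \<Longrightarrow> g i = g' i" for A g g'
    by (rule cum_cong) (use that in simp)
  have bound: "(\<Sum>g\<in>F. \<bar>f g\<bar>) \<le> L ^ card P" if F: "finite F" "F \<subseteq> G0" for F
  proof -
    have "(\<Sum>g\<in>F. \<bar>f g\<bar>) = (\<Sum>g\<in>F. \<Prod>A\<in>P. \<bar>cumulant M (\<lambda>i. Z (g i)) A\<bar>)"
      unfolding f_def CPi_def by (simp add: abs_prod)
    also have "\<dots> \<le> L ^ card P"
    proof (rule core[where c="\<lambda>A g. cumulant M (\<lambda>i. Z (g i)) A" and Q=Q, OF finP cong KLh L0 partP oneE[unfolded E_def]])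
      show "{1..2 * k} \<subseteq> (same_block P \<union> same_block Q)\<^sup>* `` {1}" by (rule pj(1))
      show "finite F" by (rule F(1))
      show "F \<subseteq> Dset Q 1 {1..2 * k}" using F(2) by (simp add: G0_def E_def)
    qed auto
    finally show ?thesis .
  qed
  have summf: "(\<lambda>g. \<bar>f g\<bar>) summable_on G0"
  proof (rule nonneg_bdd_above_summable_on)
    show "bdd_above (sum (\<lambda>g. \<bar>f g\<bar>) ` {F. F \<subseteq> G0 \<and> finite F})"
      using bound by (auto intro!: bdd_aboveI[of _ "L ^ card P"])
  qed simp
  have part2: "(\<lambda>c. \<bar>f (SOME j. j \<in> c)\<bar>) summable_on quot G (Hset E)"
  proof -
    have "((\<lambda>c. \<bar>f (SOME j. j \<in> c)\<bar>) \<circ> coset (Hset E)) summable_on G0"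
      using summf by (rule summable_on_cong[THEN iffD1, rotated]) (simp add: some_eq)
    then show ?thesis unfolding quot_eq by (rule summable_on_reindex[OF injc, THEN iffD2])
  qed
  have rhs: "infsum (\<lambda>c. f (SOME j. j \<in> c)) (quot G (Hset E)) = infsum f G0"
    unfolding quot_eq infsum_reindex[OF injc] by (rule infsum_cong) (simp add: some_eq)
  define w where "w p g = real (Ncount Q (2*k) p g) / real p" for p g
  have lhs: "(1 / real p) * (\<Sum>j\<in>{j \<in> words p (2*k). measurable_wrt (Pi1 r kk) j}. f (\<lambda>i. int (j i)))
      = infsum (\<lambda>g. f g * w p g) G0" for p
  proof -
    have W: "{j \<in> words p (2*k). measurable_wrt (Pi1 r kk) j} = Wset Q (2*k) p"
      by (simp add: Wset_def Q_def)
    have fsh': "f j' = f j" if "\<And>i. i \<in> {1..2*k} \<Longrightarrow> j' i = j i + s" for j j' s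
      using fsh[of j' j s] that by (simp add: E_def)
    have fin: "finite (nu (2*k) ` Wset Q (2*k) p)" using Wset_finite by blast
    have sub: "nu (2*k) ` Wset Q (2*k) p \<subseteq> G0"
      using nu_D[OF m1 Qsub] unfolding G0_def E_def by blast
    have zero: "Ncount Q (2*k) p g = 0" if "g \<notin> nu (2*k) ` Wset Q (2*k) p" for g
    proof -
      have "{j \<in> Wset Q (2*k) p. nu (2*k) j = g} = {}" using that by blast
      then show ?thesis unfolding Ncount_def by (simp only: card.empty)
    qed
    have "infsum (\<lambda>g. f g * w p g) G0 = infsum (\<lambda>g. f g * w p g) (nu (2*k) ` Wset Q (2*k) p)"
    proof (rule infsum_cong_neutral)
      fix x assume "x \<in> nu (2*k) ` Wset Q (2*k) p - G0"
      then show "f x * w p x = 0" using sub by blast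
    next
      fix x assume "x \<in> G0 - nu (2*k) ` Wset Q (2*k) p"
      then have "Ncount Q (2*k) p x = 0" using zero by blast
      then show "f x * w p x = 0" by (simp add: w_def)
    qed (rule refl)
    also have "\<dots> = (\<Sum>g\<in>nu (2*k) ` Wset Q (2*k) p. f g * w p g)" using fin by simp
    also have "\<dots> = (1 / real p) * (\<Sum>g\<in>nu (2*k) ` Wset Q (2*k) p. f g * real (Ncount Q (2*k) p g))"
      by (simp add: sum_distrib_left w_def)
    also have "\<dots> = (1 / real p) * (\<Sum>j\<in>Wset Q (2*k) p. f (\<lambda>i. int (j i)))"
      using words_sum[where f=f and Q=Q and p=p and m="2*k", OF m1 fsh'] by simp
    finally show ?thesis unfolding W by simp
  qed
  have wb: "0 \<le> w p g \<and> w p g \<le> 1" for p g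
  proof (cases "p = 0")
    case True then show ?thesis by (simp add: w_def)
  next
    case False
    have "Ncount Q (2*k) p g \<le> p" by (rule Ncount_le[OF m1])
    then show ?thesis using False by (simp add: w_def)
  qed
  have wl: "(\<lambda>p. w p g) \<longlonglongrightarrow> 1" if g: "g \<in> G0" for g
  proof -
    have gD': "g \<in> Dset Q 1 {1..2*k}" using g unfolding G0_def E_def .
    define Mg where "Mg = real_of_int (\<Sum>i\<in>{1..2*k}. \<bar>g i\<bar>)"
    have lo: "real p - 2 * Mg \<le> real (Ncount Q (2*k) p g)" for p
      unfolding Mg_def by (rule Ncount_ge[OF m1 Qsub gD'])
    have ev1: "eventually (\<lambda>p. 1 - 2 * Mg / real p \<le> w p g) sequentially"
    proof (rule eventually_sequentiallyI[of 1])
      fix p :: nat assume "1 \<le> p"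
      then have pp: "0 < real p" by simp
      have "1 - 2 * Mg / real p = (real p - 2 * Mg) / real p" using pp by (simp add: field_simps)
      also have "\<dots> \<le> real (Ncount Q (2*k) p g) / real p" using lo[of p] pp by (simp add: divide_right_mono)
      finally show "1 - 2 * Mg / real p \<le> w p g" by (simp add: w_def)
    qed
    have ev2: "eventually (\<lambda>p. w p g \<le> 1) sequentially" using wb by simp
    have l1: "(\<lambda>p. 1 - 2 * Mg / real p) \<longlonglongrightarrow> 1"
      using tendsto_diff[OF tendsto_const lim_const_over_n[of "2 * Mg"], of 1] by simp
    show ?thesis by (rule tendsto_sandwich[OF ev1 ev2 l1 tendsto_const])
  qed
  have lim: "(\<lambda>p. infsum (\<lambda>g. f g * w p g) G0) \<longlonglongrightarrow> infsum f G0"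
    by (rule dom_conv_infsum[OF summf wb wl])
  have G_def': "ZSig (2*k) (Pi1 r kk) = G" by (simp add: G_def)
  show ?thesis
    unfolding Heq G_def' f_def[symmetric]
  proof (intro conjI)
    show "\<forall>c\<in>quot G (Hset E). \<forall>j\<in>c. \<forall>j'\<in>c. f j = f j'" by (rule part1)
    show "(\<lambda>c. \<bar>f (SOME j. j \<in> c)\<bar>) summable_on quot G (Hset E)" by (rule part2)
    have eqs: "(\<lambda>p. (1 / real p) * (\<Sum>j\<in>{j \<in> words p (2*k). measurable_wrt (Pi1 r kk) j}. f (\<lambda>i. int (j i))))
        = (\<lambda>p. infsum (\<lambda>g. f g * w p g) G0)" using lhs by (rule ext)
    show "(\<lambda>p. (1 / real p) * (\<Sum>j\<in>{j \<in> words p (2*k). measurable_wrt (Pi1 r kk) j}. f (\<lambda>i. int (j i))))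
        \<longlonglongrightarrow> infsum (\<lambda>c. f (SOME j. j \<in> c)) (quot G (Hset E))"
      unfolding eqs rhs by (rule lim)
  qed
qed


end
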